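(* Consider a systematic $(\bar n,\bar k,\bar m)$ Strongly-MDS convolutional code, and suppose the sub-symbols of $\mathbf{x}[i]=(s_0[i],\dots,s_{\bar k-1}[i],p_0[i],\dots,p_{\bar n-\bar k-1}[i])$ are transmitted one per channel use, in this order, in the time interval $[i\bar n,(i+1)\bar n-1]$, for $i=0,1,\dots$. Then for each $j=0,1,\dots,\bar m$: (L1) if at most $\hat N\le(\bar n-\bar k)(j+1)$ transmitted sub-symbols are erased in the interval $[0,(j+1)\bar n-1]$, then $\mathbf{s}[0]=(s_0[0],\dots,s_{\bar k-1}[0])$ can be recovered by time $(j+1)\bar n-1$; (L2) if the channel introduces an erasure burst of $\hat B$ sub-symbols in the interval $[c,c+\hat B-1]$ with $\hat B\le(\bar n-\bar k)(j+1)$ and $0\le c\le\bar k-1$, then all erased source symbols are recovered by time $(j+1)\bar n-1$; (L3) if the channel introduces an erasure burst of $\hat B$ sub-symbols in the interval $[c,c+\hat B-1]$ with $0\le c\le\bar k-1$, followed by at most $\hat I$ isolated erasures, with $\hat B+\hat I\le(\bar n-\bar k)(j+1)$, then all erased symbols in the burst are recovered by time $(j+1)\bar n-1$.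
   Context: An $(\bar n,\bar k,\bar m)$ convolutional code over $\mathbb{F}_q$ maps source symbols $\mathbf{s}[i]\in\mathbb{F}_q^{\bar k}$ ($i\ge0$; $\mathbf{s}[i]=0$ for $i<0$) to $\mathbf{x}[i]=\big(\sum_{t=0}^{\bar m}\mathbf{s}^\dagger[i-t]\mathbf{G}_t\big)^\dagger\in\mathbb{F}_q^{\bar n}$ with $\mathbf{G}_t\in\mathbb{F}_q^{\bar k\times\bar n}$. It is systematic if $\mathbf{G}_0=[\mathbf{I}_{\bar k}\ \mathbf{H}_0]$ and $\mathbf{G}_t=[\mathbf{0}_{\bar k\times\bar k}\ \mathbf{H}_t]$ for $t\ge1$, so $\mathbf{x}[i]=(\mathbf{s}[i],\mathbf{p}[i])$ with $\mathbf{p}[i]=(\sum_{t=0}^{\bar m}\mathbf{s}^\dagger[i-t]\mathbf{H}_t)^\dagger\in\mathbb{F}_q^{\bar n-\bar k}$. Its $j$-th sub-symbol column distance is $d_j^c=\min\{\mathrm{wt}^c(\mathbf{x}[0],\dots,\mathbf{x}[j]) : \mathbf{s}[0]\neq0\}$, where $\mathrm{wt}^c$ counts nonzero entries (sub-symbols) in $\mathbb{F}_q$. A systematic Strongly-MDS code is a systematic $(\bar n,\bar k,\bar m)$ convolutional code with $d_j^c=(\bar n-\bar k)(j+1)+1$ for all $j=0,1,\dots,\bar m$. *)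

theory Defs
  imports Main
begin

text \<open>A systematic (n,k,m) convolutional code over a field is given by the parity
  matrices H t (t = 0..m), each a k x (n-k) matrix, represented as
  H t a b  (row a < k, column b < n - k).  A source sequence is
  s :: nat => nat => 'a, with s i a the a-th sub-symbol (a < k) of s[i];
  s[i] = 0 for i < 0 is built in by summing only over t <= i.\<close>

definition parity ::
  "nat \<Rightarrow> nat \<Rightarrow> (nat \<Rightarrow> nat \<Rightarrow> nat \<Rightarrow> 'a::field) \<Rightarrow> (nat \<Rightarrow> nat \<Rightarrow> 'a) \<Rightarrow> nat \<Rightarrow> nat \<Rightarrow> 'a"
  where "parity k m H s i b = (\<Sum>t\<in>{0..min m i}. \<Sum>a<k. s (i - t) a * H t a b)"

definition codeword ::
  "nat \<Rightarrow> nat \<Rightarrow> (nat \<Rightarrow> nat \<Rightarrow> nat \<Rightarrow> 'a::field) \<Rightarrow> (nat \<Rightarrow> nat \<Rightarrow> 'a) \<Rightarrow> nat \<Rightarrow> nat \<Rightarrow> 'a"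
  where "codeword k m H s i l = (if l < k then s i l else parity k m H s i (l - k))"

definition subsym ::
  "nat \<Rightarrow> nat \<Rightarrow> nat \<Rightarrow> (nat \<Rightarrow> nat \<Rightarrow> nat \<Rightarrow> 'a::field) \<Rightarrow> (nat \<Rightarrow> nat \<Rightarrow> 'a) \<Rightarrow> nat \<Rightarrow> 'a"
  where "subsym n k m H s \<tau> = codeword k m H s (\<tau> div n) (\<tau> mod n)"

definition col_weight ::
  "nat \<Rightarrow> nat \<Rightarrow> nat \<Rightarrow> (nat \<Rightarrow> nat \<Rightarrow> nat \<Rightarrow> 'a::field) \<Rightarrow> (nat \<Rightarrow> nat \<Rightarrow> 'a) \<Rightarrow> nat \<Rightarrow> nat"
  where "col_weight n k m H s j = card {l. l < (j + 1) * n \<and> codeword k m H s (l div n) (l mod n) \<noteq> 0}"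

definition col_dist ::
  "nat \<Rightarrow> nat \<Rightarrow> nat \<Rightarrow> (nat \<Rightarrow> nat \<Rightarrow> nat \<Rightarrow> 'a::field) \<Rightarrow> nat \<Rightarrow> nat"
  where "col_dist n k m H j = Inf {col_weight n k m H s j | s. \<exists>a<k. s 0 a \<noteq> 0}"

definition strongly_MDS ::
  "nat \<Rightarrow> nat \<Rightarrow> nat \<Rightarrow> (nat \<Rightarrow> nat \<Rightarrow> nat \<Rightarrow> 'a::field) \<Rightarrow> bool"
  where "strongly_MDS n k m H \<longleftrightarrow> (\<forall>j\<le>m. col_dist n k m H j = (n - k) * (j + 1) + 1)"

text \<open>With erased channel uses E, the source sub-symbols s i a, (i,a) in Q, can be
  recovered by time T - 1: any two source sequences whose transmitted sub-symbols
  agree on all non-erased channel uses tau < T agree on Q.\<close>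
definition recoverable ::
  "nat \<Rightarrow> nat \<Rightarrow> nat \<Rightarrow> (nat \<Rightarrow> nat \<Rightarrow> nat \<Rightarrow> 'a::field) \<Rightarrow> nat set \<Rightarrow> nat \<Rightarrow> (nat \<times> nat) set \<Rightarrow> bool"
  where "recoverable n k m H E T Q \<longleftrightarrow>
    (\<forall>s s'. (\<forall>\<tau><T. \<tau> \<notin> E \<longrightarrow> subsym n k m H s \<tau> = subsym n k m H s' \<tau>)
        \<longrightarrow> (\<forall>(i, a)\<in>Q. s i a = s' i a))"

definition erased_src :: "nat \<Rightarrow> nat \<Rightarrow> nat set \<Rightarrow> (nat \<times> nat) set"
  where "erased_src n k A = {(\<tau> div n, \<tau> mod n) | \<tau>. \<tau> \<in> A \<and> \<tau> mod n < k}"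

definition isolated_in :: "nat set \<Rightarrow> nat set \<Rightarrow> bool"
  where "isolated_in J E \<longleftrightarrow> (\<forall>\<tau>\<in>J. Suc \<tau> \<notin> E \<and> (\<forall>\<sigma>\<in>E. Suc \<sigma> \<noteq> \<tau>))"

end

theory Submission
  imports Defs
begin

lemma parity_shift:
  assumes "\<forall>u<i. \<forall>a<k. d u a = 0"
  shows "parity k m H (\<lambda>t a. d (t+i) a) t b = parity k m H d (t+i) b"
  unfolding parity_def
proof (rule sum.mono_neutral_cong_left)
  show "finite {0..min m (t + i)}" by simp
  show "{0..min m t} \<subseteq> {0..min m (t + i)}" by auto
  show "\<forall>x\<in>{0..min m (t + i)} - {0..min m t}. (\<Sum>a<k. d (t + i - x) a * H x a b) = 0"
  proof
    fix x assume "x \<in> {0..min m (t + i)} - {0..min m t}"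
    then have "t + i - x < i" by auto
    then show "(\<Sum>a<k. d (t + i - x) a * H x a b) = 0" using assms by simp
  qed
  show "\<And>x. x \<in> {0..min m t} \<Longrightarrow> (\<Sum>a<k. d (t - x + i) a * H x a b) = (\<Sum>a<k. d (t + i - x) a * H x a b)"
    by (rule sum.cong) (auto simp: Nat.add_diff_assoc2)
qed

lemma codeword_shift:
  assumes "\<forall>u<i. \<forall>a<k. d u a = 0"
  shows "codeword k m H (\<lambda>t a. d (t+i) a) t l = codeword k m H d (t+i) l"
  unfolding codeword_def using parity_shift[OF assms] by simp

lemma subsym_diff:
  "subsym n k m H (\<lambda>i a. s i a - s' i a) \<tau> = subsym n k m H s \<tau> - subsym n k m H s' \<tau>"
  unfolding subsym_def codeword_def parity_def
  by (simp add: sum_subtractf left_diff_distrib)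

lemma key:
  fixes H :: "nat \<Rightarrow> nat \<Rightarrow> nat \<Rightarrow> 'a::field"
  assumes MDS: "strongly_MDS n k m H" and ij: "i \<le> j" "j \<le> m" and n0: "0 < n"
    and z: "\<forall>u<i. \<forall>a<k. d u a = 0"
    and zs: "\<forall>\<tau>. i*n \<le> \<tau> \<and> \<tau> < (j+1)*n \<and> \<tau> \<notin> E \<longrightarrow> subsym n k m H d \<tau> = 0"
    and cd: "card (E \<inter> {i*n..<(j+1)*n}) \<le> (n-k)*(j+1-i)"
  shows "\<forall>a<k. d i a = 0"
proof (rule ccontr)
  assume "\<not> (\<forall>a<k. d i a = 0)"
  then obtain a where a: "a < k" "d i a \<noteq> 0" by auto
  define d' where "d' = (\<lambda>t a. d (t+i) a)"
  have cw: "codeword k m H d' t l = codeword k m H d (t+i) l" for t l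
    unfolding d'_def by (rule codeword_shift[OF z])
  have "col_dist n k m H (j-i) \<le> col_weight n k m H d' (j-i)"
    unfolding col_dist_def
  proof (rule cInf_lower)
    show "col_weight n k m H d' (j - i) \<in> {col_weight n k m H s (j-i) |s. \<exists>a<k. s 0 a \<noteq> 0}"
      using a unfolding d'_def by (intro CollectI exI[of _ d']) (auto simp: d'_def)
  qed simp
  also have "col_weight n k m H d' (j-i) \<le> card (E \<inter> {i*n..<(j+1)*n})"
  proof -
    define A where "A = {l. l < (j - i + 1) * n \<and> codeword k m H d' (l div n) (l mod n) \<noteq> 0}"
    have "(\<lambda>l. l + i*n) ` A \<subseteq> E \<inter> {i*n..<(j+1)*n}"
    proof
      fix x assume "x \<in> (\<lambda>l. l + i*n) ` A"
      then obtain l where l: "l \<in> A" "x = l + i*n" by auto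
      have dv: "(l + i*n) div n = l div n + i" "(l + i*n) mod n = l mod n" using n0 by auto
      have "(j - i + 1) * n + i*n = (j+1)*n" using ij by (simp add: add_mult_distrib[symmetric])
      then have rng: "i*n \<le> x" "x < (j+1)*n" using l unfolding A_def by auto
      have "subsym n k m H d x \<noteq> 0" using l cw dv unfolding A_def subsym_def by auto
      then show "x \<in> E \<inter> {i*n..<(j+1)*n}" using zs rng by auto
    qed
    then have "card ((\<lambda>l. l + i*n) ` A) \<le> card (E \<inter> {i*n..<(j+1)*n})"
      by (intro card_mono) auto
    moreover have "card ((\<lambda>l. l + i*n) ` A) = card A" by (rule card_image) (auto simp: inj_on_def)
    ultimately show ?thesis unfolding col_weight_def A_def by simp
  qed
  also have "\<dots> \<le> (n-k)*(j-i+1)" using cd ij by (simp add: Suc_diff_le)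
  finally have "col_dist n k m H (j-i) \<le> (n-k)*(j-i+1)" .
  moreover have "col_dist n k m H (j-i) = (n-k)*(j-i+1) + 1"
    using MDS ij unfolding strongly_MDS_def by simp
  ultimately show False by simp
qed

lemma ar2: fixes c B i n k j :: nat
  assumes "c < k" "k \<le> n" "B \<le> (n-k)*(j+1)" "i*n < c+B"
  shows "i \<le> j"
proof -
  define p where "p = n - k"
  have n: "n = k + p" using assms p_def by simp
  have "k \<le> k*(j+1)" by simp
  then have "i*n < (j+1)*n" using assms unfolding n p_def[symmetric] by (simp add: algebra_simps)
  then have "i < j+1" using mult_less_cancel2 by blast
  then show ?thesis by simp
qed
lemma ar: fixes c B J i n k j :: nat
  assumes "c < k" "k \<le> n" "B + J \<le> (n-k)*(j+1)" "1 \<le> i" "i*n < c+B"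
  shows "c+B-i*n + J \<le> (n-k)*(j+1-i)"
proof -
  have ij: "i \<le> j" using ar2[OF assms(1,2) _ assms(5)] assms(3) by simp
  define p where "p = n - k"
  have n: "n = k + p" using assms p_def by simp
  have 1: "k \<le> i*k" using assms by simp
  have 2: "i*n = i*k + p*i" unfolding n by (simp add: algebra_simps)
  have 3: "p*(j+1-i) + p*i = p*(j+1)" proof -
    have "p*i \<le> p*(j+1)" using ij by (intro mult_le_mono2) simp
    then show ?thesis by (simp only: diff_mult_distrib2)
  qed
  show ?thesis using assms 1 2 3 unfolding p_def[symmetric] by linarith
qed

lemma burst:
  fixes H :: "nat \<Rightarrow> nat \<Rightarrow> nat \<Rightarrow> 'a::field"
  assumes MDS: "strongly_MDS n k m H" and jm: "j \<le> m" and kn: "k \<le> n"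
    and ck: "c < k" and BJ: "B + card J \<le> (n-k)*(j+1)" and fJ: "finite J"
  shows "recoverable n k m H ({c..<c + B} \<union> J) ((j + 1) * n) (erased_src n k {c..<c + B})"
  unfolding recoverable_def
proof (intro allI impI)
  fix s s' :: "nat \<Rightarrow> nat \<Rightarrow> 'a"
  assume ag: "\<forall>\<tau><(j + 1) * n. \<tau> \<notin> {c..<c + B} \<union> J \<longrightarrow> subsym n k m H s \<tau> = subsym n k m H s' \<tau>"
  define E where "E = {c..<c + B} \<union> J"
  define d where "d = (\<lambda>i a. s i a - s' i a)"
  have n0: "0 < n" using ck kn by simp
  have zs: "\<forall>\<tau>. i*n \<le> \<tau> \<and> \<tau> < (j+1)*n \<and> \<tau> \<notin> E \<longrightarrow> subsym n k m H d \<tau> = 0" for i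
    using ag unfolding d_def E_def subsym_diff by auto
  have ind: "i*n < c+B \<Longrightarrow> \<forall>a<k. d i a = 0" for i
  proof (induction i rule: less_induct)
    case (less i)
    have ij: "i \<le> j" using ar2[OF ck kn _ less.prems] BJ by simp
    have z: "\<forall>u<i. \<forall>a<k. d u a = 0"
    proof (intro allI impI)
      fix u a assume "u < i" "a < k"
      moreover have "u*n < c+B" using \<open>u < i\<close> less.prems
        by (meson le_less_trans less_imp_le_nat mult_le_mono1)
      ultimately show "d u a = 0" using less.IH by blast
    qed
    have sub: "E \<inter> {i*n..<(j+1)*n} \<subseteq> ({c..<c+B} \<inter> {i*n..<(j+1)*n}) \<union> J"
      unfolding E_def by auto
    have "card (E \<inter> {i*n..<(j+1)*n}) \<le> card (({c..<c+B} \<inter> {i*n..<(j+1)*n}) \<union> J)"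
      using fJ by (intro card_mono[OF _ sub]) auto
    also have "\<dots> \<le> card ({c..<c+B} \<inter> {i*n..<(j+1)*n}) + card J" by (rule card_Un_le)
    also have "\<dots> \<le> (n-k)*(j+1-i)"
    proof (cases "i = 0")
      case True
      have "card ({c..<c+B} \<inter> {i*n..<(j+1)*n}) \<le> card {c..<c+B}" by (intro card_mono) auto
      then show ?thesis using True BJ by simp
    next
      case False
      have "card ({c..<c+B} \<inter> {i*n..<(j+1)*n}) \<le> card {i*n..<c+B}" by (intro card_mono) auto
      then show ?thesis using ar[OF ck kn BJ _ less.prems] False by simp
    qed
    finally have cd: "card (E \<inter> {i*n..<(j+1)*n}) \<le> (n-k)*(j+1-i)" .
    show ?case by (rule key[OF MDS ij jm n0 z zs cd])
  qed
  show "\<forall>(i, a)\<in>erased_src n k {c..<c + B}. s i a = s' i a"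
  proof
    fix x assume "x \<in> erased_src n k {c..<c + B}"
    then obtain \<tau> where t: "x = (\<tau> div n, \<tau> mod n)" "\<tau> \<in> {c..<c+B}" "\<tau> mod n < k"
      unfolding erased_src_def by auto
    have "(\<tau> div n) * n < c + B" using t(2) by (metis atLeastLessThan_iff div_times_less_eq_dividend le_less_trans)
    then have "d (\<tau> div n) (\<tau> mod n) = 0" using ind t(3) by blast
    then show "case x of (i, a) \<Rightarrow> s i a = s' i a" using t(1) unfolding d_def by simp
  qed
qed

theorem lemma1:
  fixes H :: "nat \<Rightarrow> nat \<Rightarrow> nat \<Rightarrow> 'a::{field,finite}" and n k m :: nat
  assumes "k \<le> n" and "strongly_MDS n k m H"
  shows "\<forall>j\<le>m.
    (\<forall>E :: nat set. card (E \<inter> {..<(j + 1) * n}) \<le> (n - k) * (j + 1) \<longrightarrow>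
        recoverable n k m H E ((j + 1) * n) ({0} \<times> {..<k}))
  \<and> (\<forall>c B. c < k \<and> B \<le> (n - k) * (j + 1) \<longrightarrow>
        recoverable n k m H {c..<c + B} ((j + 1) * n) (erased_src n k {c..<c + B}))
  \<and> (\<forall>c B I J. c < k \<and> B + I \<le> (n - k) * (j + 1) \<and> J \<subseteq> {c + B..} \<and> finite J \<and> card J \<le> I
        \<and> isolated_in J ({c..<c + B} \<union> J) \<longrightarrow>
        recoverable n k m H ({c..<c + B} \<union> J) ((j + 1) * n) (erased_src n k {c..<c + B}))"
proof (intro allI impI conjI)
  fix j assume jm: "j \<le> m"
  show "recoverable n k m H E ((j + 1) * n) ({0} \<times> {..<k})"
    if cE: "card (E \<inter> {..<(j + 1) * n}) \<le> (n - k) * (j + 1)" for E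
    unfolding recoverable_def
  proof (intro allI impI)
    fix s s' :: "nat \<Rightarrow> nat \<Rightarrow> 'a"
    assume ag: "\<forall>\<tau><(j + 1) * n. \<tau> \<notin> E \<longrightarrow> subsym n k m H s \<tau> = subsym n k m H s' \<tau>"
    show "\<forall>(i, a)\<in>{0} \<times> {..<k}. s i a = s' i a"
    proof (cases "k = 0")
      case True then show ?thesis by simp
    next
      case False
      then have n0: "0 < n" using assms(1) by simp
      define d where "d = (\<lambda>i a. s i a - s' i a)"
      have zs: "\<forall>\<tau>. 0*n \<le> \<tau> \<and> \<tau> < (j+1)*n \<and> \<tau> \<notin> E \<longrightarrow> subsym n k m H d \<tau> = 0"
        using ag unfolding d_def subsym_diff by auto
      have cd: "card (E \<inter> {0*n..<(j+1)*n}) \<le> (n-k)*(j+1-0)" using cE by (simp add: atLeast0LessThan)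
      have "\<forall>a<k. d 0 a = 0" by (rule key[OF assms(2) _ jm n0 _ zs cd]) auto
      then show ?thesis unfolding d_def by auto
    qed
  qed
  show "recoverable n k m H {c..<c + B} ((j + 1) * n) (erased_src n k {c..<c + B})"
    if "c < k \<and> B \<le> (n - k) * (j + 1)" for c B
    using burst[OF assms(2) jm assms(1), of c B "{}"] that by simp
  show "recoverable n k m H ({c..<c + B} \<union> J) ((j + 1) * n) (erased_src n k {c..<c + B})"
    if h: "c < k \<and> B + I \<le> (n - k) * (j + 1) \<and> J \<subseteq> {c + B..} \<and> finite J \<and> card J \<le> I
        \<and> isolated_in J ({c..<c + B} \<union> J)" for c B I J
    using burst[OF assms(2) jm assms(1), of c B J] h by simp
qed

end
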